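(* For all integers $s\ge1$ and $k\ge2$, the polynomial $F_{s,k}(x)$ is divisible (in $\mathbb{Q}[x]$) by $\prod_{p=k}^{s}(x-p)$, where the empty product (when $k>s$) equals $1$.
   Context: For an integer $j\ge0$, $\binom{x}{j}=x(x-1)\cdots(x-j+1)/j!$ as a polynomial in $x$, and $\binom{x}{j}=0$ for $j<0$. For integers $s\ge1$, $k\ge1$, the Moser polynomial is $F_{s,k}(x)=\sum_{p=1}^{s}(-1)^{p-1}p^{k-1}\binom{x}{s-p}$. *)

theory Defs
  imports "HOL-Computational_Algebra.Polynomial"
begin

definition binom_poly :: "nat \<Rightarrow> rat poly" where
  "binom_poly j = smult (1 / fact j) (\<Prod>i<j. [:- of_nat i, 1:])"

text \<open>Moser polynomial F_{s,k}(x) = sum_{p=1}^s (-1)^(p-1) p^(k-1) binom(x, s-p).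
  Since p ranges over 1..s, s - p >= 0, so the convention binom(x,j)=0 for j<0 is never needed.\<close>
definition moser_poly :: "nat \<Rightarrow> nat \<Rightarrow> rat poly" where
  "moser_poly s k = (\<Sum>p=1..s. smult ((-1) ^ (p - 1) * of_nat p ^ (k - 1)) (binom_poly (s - p)))"

end

theory Submission
  imports Defs
begin

lemma poly_binom: "poly (binom_poly j) (of_nat m) = of_nat (m choose j)"
  by (simp add: binom_poly_def poly_prod binomial_gbinomial gbinomial_prod_rev atLeast0LessThan divide_inverse mult.commute)

lemma pascal_sum:
  fixes f :: "nat \<Rightarrow> rat"
  shows "(\<Sum>j\<le>Suc m. (-1)^j * of_nat (Suc m choose j) * f j)
       = (\<Sum>j\<le>m. (-1)^j * of_nat (m choose j) * (f j - f (Suc j)))"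
proof -
  have "(\<Sum>j\<le>Suc m. (-1)^j * of_nat (Suc m choose j) * f j)
      = f 0 + (\<Sum>j\<le>m. (-1)^Suc j * of_nat (Suc m choose Suc j) * f (Suc j))"
    by (subst sum.atMost_Suc_shift) simp
  also have "\<dots> = f 0 + (\<Sum>j\<le>m. (-1)^Suc j * of_nat (m choose Suc j) * f (Suc j))
       + (\<Sum>j\<le>m. (-1)^Suc j * of_nat (m choose j) * f (Suc j))"
    by (simp add: sum.distrib[symmetric] algebra_simps)
  also have "\<dots> = (\<Sum>j\<le>m. (-1)^j * of_nat (m choose j) * f j)
       + (\<Sum>j\<le>m. (-1)^Suc j * of_nat (m choose j) * f (Suc j))"
  proof -
    have "(\<Sum>j\<le>Suc m. (-1)^j * of_nat (m choose j) * f j) = f 0 + (\<Sum>j\<le>m. (-1)^Suc j * of_nat (m choose Suc j) * f (Suc j))"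
      by (subst sum.atMost_Suc_shift) simp
    moreover have "(\<Sum>j\<le>Suc m. (-1)^j * of_nat (m choose j) * f j) = (\<Sum>j\<le>m. (-1)^j * of_nat (m choose j) * f j)"
      by simp
    ultimately show ?thesis by simp
  qed
  also have "\<dots> = (\<Sum>j\<le>m. (-1)^j * of_nat (m choose j) * (f j - f (Suc j)))"
    by (simp add: sum.distrib[symmetric] algebra_simps)
  finally show ?thesis .
qed

lemma alt_sum_zero:
  "\<forall>(a::rat) d. d < m \<longrightarrow> (\<Sum>j\<le>m. (-1)^j * of_nat (m choose j) * (a + of_nat j)^d) = 0"
proof (induction m)
  case 0 then show ?case by simp
next
  case (Suc m)
  show ?case
  proof (intro allI impI)
    fix a :: rat and d assume d: "d < Suc m"
    have "(\<Sum>j\<le>Suc m. (-1)^j * of_nat (Suc m choose j) * (a + of_nat j)^d)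
       = (\<Sum>j\<le>m. (-1)^j * of_nat (m choose j) * ((a + of_nat j)^d - (a + of_nat (Suc j))^d))"
      by (rule pascal_sum)
    also have "\<dots> = (\<Sum>j\<le>m. (-1)^j * of_nat (m choose j) * (- (\<Sum>i<d. of_nat (d choose i) * (a + of_nat j)^i)))"
    proof (rule sum.cong[OF refl])
      fix j
      have "(a + of_nat (Suc j))^d = ((a + of_nat j) + 1)^d" by (simp add: algebra_simps)
      also have "\<dots> = (\<Sum>i\<le>d. of_nat (d choose i) * (a + of_nat j)^i)"
        by (simp add: binomial_ring mult.commute)
      also have "\<dots> = (\<Sum>i<d. of_nat (d choose i) * (a + of_nat j)^i) + (a + of_nat j)^d"
        by (simp add: lessThan_Suc_atMost[symmetric])
      finally show "(-1)^j * of_nat (m choose j) * ((a + of_nat j)^d - (a + of_nat (Suc j))^d)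
         = (-1)^j * of_nat (m choose j) * (- (\<Sum>i<d. of_nat (d choose i) * (a + of_nat j)^i))"
        by simp
    qed
    also have "\<dots> = - (\<Sum>i<d. of_nat (d choose i) * (\<Sum>j\<le>m. (-1)^j * of_nat (m choose j) * (a + of_nat j)^i))"
      by (simp add: sum_distrib_left sum_negf sum.swap[of _ "{..<d}"] algebra_simps)
    also have "\<dots> = 0"
      using Suc.IH d by simp
    finally show "(\<Sum>j\<le>Suc m. (-1)^j * of_nat (Suc m choose j) * (a + of_nat j)^d) = 0" .
  qed
qed

lemma roots_dvd:
  fixes p :: "rat poly"
  assumes "finite A" "\<forall>a\<in>A. poly p (of_nat a) = 0"
  shows "(\<Prod>a\<in>A. [:- of_nat a, 1:]) dvd p"
  using assms
proof (induction A arbitrary: p rule: finite_induct)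
  case empty then show ?case by simp
next
  case (insert a A)
  then obtain q where q: "p = [:- of_nat a, 1:] * q"
    using poly_eq_0_iff_dvd by (metis dvdE insertI1)
  have "\<forall>b\<in>A. poly q (of_nat b) = 0"
  proof
    fix b assume b: "b \<in> A"
    then have "b \<noteq> a" using insert by auto
    then have "poly [:- of_nat a, 1:] (of_nat b :: rat) \<noteq> 0" by simp
    moreover have "poly p (of_nat b) = 0" using insert b by auto
    ultimately show "poly q (of_nat b) = 0" using q by simp
  qed
  then have "(\<Prod>a\<in>A. [:- of_nat a, 1:]) dvd q" using insert by blast
  then have "[:- of_nat a, 1:] * (\<Prod>a\<in>A. [:- of_nat a, 1:]) dvd p" using q by (metis mult_dvd_mono dvd_refl)
  then show ?case using insert(1,2) by simp
qed

lemma moser_root: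
  assumes "2 \<le> k" "k \<le> m" "m \<le> s"
  shows "poly (moser_poly s k) (of_nat m) = 0"
proof -
  define g where "g j = (-1)^j * of_nat (m choose j) * (- of_nat s + of_nat j :: rat)^(k-1)" for j
  have z: "(\<Sum>j\<le>m. g j) = 0"
  proof -
    have "k - 1 < m" using assms by simp
    then show ?thesis using alt_sum_zero[of m] unfolding g_def by blast
  qed
  have "(\<Sum>j\<le>s. g j) = (\<Sum>j\<le>m. g j)"
    by (rule sum.mono_neutral_right) (use assms in \<open>auto simp: g_def\<close>)
  moreover have "(\<Sum>j\<le>s. g j) = (\<Sum>j<s. g j)"
    using assms by (simp add: lessThan_Suc_atMost[symmetric] g_def)
  moreover have "(\<Sum>j<s. g j) = (\<Sum>p=1..s. g (s - p))"
    by (rule sum.reindex_bij_witness[of _ "\<lambda>j. s - j" "\<lambda>j. s - j"]) auto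
  ultimately have z2: "(\<Sum>p=1..s. g (s - p)) = 0" using z by simp
  have t: "g (s - p) = (-1)^(s-1) * (-1)^(k-1) * ((-1) ^ (p - 1) * of_nat p ^ (k - 1) * of_nat (m choose (s - p)))"
    if p: "p \<in> {1..s}" for p
  proof -
    have e: "(-1::rat)^(s-1) = (-1)^(s-p) * (-1)^(p-1)"
    proof -
      have "s - 1 = (s - p) + (p - 1)" using p by auto
      then show ?thesis by (metis power_add)
    qed
    have "(-1::rat)^(s-1) * (-1)^(p-1) = (-1)^(s-p) * ((-1)^(p-1))^2"
      unfolding e by (simp only: power2_eq_square mult.assoc)
    moreover have "((-1::rat)^(p-1))^2 = 1" by (simp add: power_mult[symmetric] mult.commute[of _ 2] power_mult)
    ultimately have e2: "(-1::rat)^(s-p) = (-1)^(s-1) * (-1)^(p-1)"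
      by (metis mult.right_neutral)
    have "(- of_nat s + of_nat (s - p) :: rat) = - of_nat p" using p by (simp add: of_nat_diff)
    then show ?thesis unfolding g_def e2
      by (simp add: power_minus' algebra_simps)
  qed
  have "poly (moser_poly s k) (of_nat m) = (\<Sum>p=1..s. (-1) ^ (p - 1) * of_nat p ^ (k - 1) * of_nat (m choose (s - p)))"
    by (simp add: moser_poly_def poly_sum poly_binom)
  moreover have "(\<Sum>p=1..s. g (s - p)) = (-1)^(s-1) * (-1)^(k-1) * (\<Sum>p=1..s. (-1) ^ (p - 1) * of_nat p ^ (k - 1) * of_nat (m choose (s - p)))"
    by (simp add: t sum_distrib_left)
  ultimately show ?thesis using z2 by simp
qed

theorem mainTheorem18:
  fixes s k :: nat
  assumes "s \<ge> 1" and "k \<ge> 2"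
  shows "(\<Prod>p=k..s. [:- of_nat p, 1:]) dvd moser_poly s k"
  by (rule roots_dvd) (use assms moser_root in auto)

end
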